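(* Let $\mathbf V$ be a variety of aperiodic monoids that does not contain the monoid $S(xyx)$. Suppose that $\mathbf V$ is not hereditarily finitely based. Then $\mathbf V$ satisfies either the identity $xyx\approx xyx^2$ or the identity $xyx\approx x^2yx$.
   Context: Monoid varieties are varieties of monoids considered as algebras with multiplication and a nullary operation for the identity element. A monoid is aperiodic if all its subgroups are trivial. A variety is hereditarily finitely based if all its subvarieties have a finite basis of identities. Let $F^1$ be the free monoid over a countably infinite alphabet; $S(xyx)$ is the Rees quotient monoid of $F^1$ over the ideal of all words that are not subwords of $xyx$. *)

theory Defs
  imports Main "HOL-Library.Sublist"
begin

text \<open>By Birkhoff's theorem, monoid varieties are
  in one-to-one (order-reversing) correspondence with equational theories,
  i.e. sets of identities closed under monoid equational deduction.  We
  represent a variety by its equational theory.\<close>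

type_synonym word = "nat list"
type_synonym identity = "word \<times> word"

definition subst_word :: "(nat \<Rightarrow> word) \<Rightarrow> word \<Rightarrow> word" where
  "subst_word \<sigma> w = concat (map \<sigma> w)"

inductive_set eq_closure :: "identity set \<Rightarrow> identity set" for B where
  base: "p \<in> B \<Longrightarrow> p \<in> eq_closure B"
| refl: "(u, u) \<in> eq_closure B"
| sym: "(u, v) \<in> eq_closure B \<Longrightarrow> (v, u) \<in> eq_closure B"
| trans: "(u, v) \<in> eq_closure B \<Longrightarrow> (v, w) \<in> eq_closure B \<Longrightarrow> (u, w) \<in> eq_closure B"
| mult: "(u, v) \<in> eq_closure B \<Longrightarrow> (a @ u @ b, a @ v @ b) \<in> eq_closure B"
| subst: "(u, v) \<in> eq_closure B \<Longrightarrow> (subst_word \<sigma> u, subst_word \<sigma> v) \<in> eq_closure B"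

definition eq_theory :: "identity set \<Rightarrow> bool" where
  "eq_theory T \<longleftrightarrow> eq_closure T = T"

definition satisfies :: "identity set \<Rightarrow> word \<Rightarrow> word \<Rightarrow> bool" where
  "satisfies T u v \<longleftrightarrow> (u, v) \<in> T"

definition finitely_based :: "identity set \<Rightarrow> bool" where
  "finitely_based T \<longleftrightarrow> (\<exists>B. finite B \<and> eq_closure B = T)"

text \<open>Subvarieties of the variety with theory T are the varieties whose theory
  contains T.\<close>
definition hereditarily_finitely_based :: "identity set \<Rightarrow> bool" where
  "hereditarily_finitely_based T \<longleftrightarrow>
     (\<forall>T'. eq_theory T' \<and> T \<subseteq> T' \<longrightarrow> finitely_based T')"

text \<open>A variety consists of aperiodic monoids iff it satisfies x^n = x^(n+1)
  for some n (letter x = 0).\<close>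
definition aperiodic_variety :: "identity set \<Rightarrow> bool" where
  "aperiodic_variety T \<longleftrightarrow> (\<exists>n. satisfies T (replicate n 0) (replicate (Suc n) 0))"

text \<open>The monoid S(xyx) with x = 0, y = 1: elements are the subwords of xyx
  (Some w) together with the zero (None).\<close>
definition S_xyx_carrier :: "word option set" where
  "S_xyx_carrier = insert None {Some w | w. sublist w [0, 1, 0]}"

definition S_xyx_mult :: "word option \<Rightarrow> word option \<Rightarrow> word option" where
  "S_xyx_mult a b = (case (a, b) of
      (Some u, Some v) \<Rightarrow> (if sublist (u @ v) [0, 1, 0] then Some (u @ v) else None)
    | _ \<Rightarrow> None)"

fun S_xyx_eval :: "(nat \<Rightarrow> word option) \<Rightarrow> word \<Rightarrow> word option" where
  "S_xyx_eval \<phi> [] = Some []"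
| "S_xyx_eval \<phi> (x # w) = S_xyx_mult (\<phi> x) (S_xyx_eval \<phi> w)"

definition S_xyx_satisfies :: "word \<Rightarrow> word \<Rightarrow> bool" where
  "S_xyx_satisfies u v \<longleftrightarrow>
     (\<forall>\<phi>. (\<forall>x. \<phi> x \<in> S_xyx_carrier) \<longrightarrow> S_xyx_eval \<phi> u = S_xyx_eval \<phi> v)"

definition contains_S_xyx :: "identity set \<Rightarrow> bool" where
  "contains_S_xyx T \<longleftrightarrow> (\<forall>(u, v) \<in> T. S_xyx_satisfies u v)"

end

theory Submission
  imports Defs
begin

lemma sw_Nil[simp]: "subst_word s [] = []" by (simp add: subst_word_def)
lemma sw_Cons[simp]: "subst_word s (x # u) = s x @ subst_word s u" by (simp add: subst_word_def)
lemma sw_app[simp]: "subst_word s (u @ v) = subst_word s u @ subst_word s v" by (simp add: subst_word_def)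
lemma sw_rep[simp]: "subst_word s (replicate k z) = concat (replicate k (s z))"
  by (induction k) auto

lemma sw_count: "subst_word (\<lambda>y. if y = z then [t] else []) u = replicate (count_list u z) t"
  by (induction u) auto

lemma ec_app: "(a, b) \<in> eq_closure B \<Longrightarrow> (u, v) \<in> eq_closure B \<Longrightarrow> (a @ u, b @ v) \<in> eq_closure B"
proof -
  assume h1: "(a, b) \<in> eq_closure B" and h2: "(u, v) \<in> eq_closure B"
  have "([] @ a @ u, [] @ b @ u) \<in> eq_closure B" by (rule eq_closure.mult[OF h1])
  moreover have "(b @ u @ [], b @ v @ []) \<in> eq_closure B" by (rule eq_closure.mult[OF h2])
  ultimately show ?thesis by (auto intro: eq_closure.trans)
qed

lemma ec_trans3: "(a, b) \<in> eq_closure B \<Longrightarrow> (b', c) \<in> eq_closure B \<Longrightarrow> b = b' \<Longrightarrow> (a, c) \<in> eq_closure B"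
  using eq_closure.trans[of a b B c] by simp

lemma ec_sub: "B \<subseteq> S \<Longrightarrow> eq_closure S = S \<Longrightarrow> eq_closure B \<subseteq> S"
proof
  fix p assume "B \<subseteq> S" "eq_closure S = S" "p \<in> eq_closure B"
  then show "p \<in> S"
  proof -
    have "p \<in> eq_closure S" using \<open>p \<in> eq_closure B\<close> \<open>B \<subseteq> S\<close>
      by (induction rule: eq_closure.induct) (auto intro: eq_closure.intros)
    then show ?thesis using \<open>eq_closure S = S\<close> by simp
  qed
qed

lemma ec_letter: "(replicate a 0, replicate b 0) \<in> eq_closure B \<Longrightarrow>
   (replicate a z, replicate b z) \<in> eq_closure B"
  using eq_closure.subst[of "replicate a 0" "replicate b 0" B "\<lambda>_. [z]"] by simp

lemma pow_ap:
  assumes "(replicate n z, replicate (Suc n) z) \<in> eq_closure B"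
  shows "(replicate n z, replicate (n + k) z) \<in> eq_closure B"
proof (induction k)
  case 0 then show ?case by (simp add: eq_closure.refl)
next
  case (Suc k)
  have "(replicate n z @ replicate k z, replicate (Suc n) z @ replicate k z) \<in> eq_closure B"
    using ec_app[OF assms eq_closure.refl] by blast
  then have "(replicate (n + k) z, replicate (n + Suc k) z) \<in> eq_closure B"
    by (simp add: replicate_add[symmetric])
  with Suc show ?case by (blast intro: eq_closure.trans)
qed

lemma pow_ge:
  assumes "(replicate n z, replicate (Suc n) z) \<in> eq_closure B" "a \<ge> n" "b \<ge> n"
  shows "(replicate a z, replicate b z) \<in> eq_closure B"
proof -
  have "(replicate n z, replicate a z) \<in> eq_closure B" using pow_ap[OF assms(1), of "a - n"] assms by simp
  moreover have "(replicate n z, replicate b z) \<in> eq_closure B" using pow_ap[OF assms(1), of "b - n"] assms by simp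
  ultimately show ?thesis by (blast intro: eq_closure.trans eq_closure.sym)
qed

lemma lemP:
  assumes ap: "(replicate n z, replicate (Suc n) z) \<in> eq_closure B"
    and h: "(replicate a z, replicate b z) \<in> eq_closure B" and ab: "a < b"
  shows "(replicate a z, replicate (Suc a) z) \<in> eq_closure B"
proof -
  have k: "(replicate a z, replicate (a + k * (b - a)) z) \<in> eq_closure B" for k
  proof (induction k)
    case 0 then show ?case by (simp add: eq_closure.refl)
  next
    case (Suc k)
    have "(replicate (a + k * (b - a)) z @ replicate (b - a) z, replicate a z @ replicate (b - a) z) \<in> eq_closure B"
      using ec_app[OF eq_closure.sym[OF Suc] eq_closure.refl] by blast
    moreover have "replicate (a + k * (b - a)) z @ replicate (b - a) z = replicate (a + Suc k * (b - a)) z"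
    proof -
      have e: "a + k * (b - a) + (b - a) = a + Suc k * (b - a)" by simp
      show ?thesis by (simp only: replicate_add[symmetric] e)
    qed
    moreover have "replicate a z @ replicate (b - a) z = replicate b z" using ab
      by (simp add: replicate_add[symmetric])
    ultimately have "(replicate (a + Suc k * (b - a)) z, replicate a z) \<in> eq_closure B"
      using h by (auto intro: eq_closure.trans eq_closure.sym)
    then show ?case by (rule eq_closure.sym)
  qed
  define N where "N = a + n * (b - a)"
  have "n * 1 \<le> n * (b - a)" using ab by (intro mult_le_mono2) simp
  then have N: "N \<ge> n" unfolding N_def by linarith
  have 1: "(replicate a z, replicate N z) \<in> eq_closure B" using k N_def by simp
  have "([z] @ replicate a z, [z] @ replicate N z) \<in> eq_closure B" using ec_app[OF eq_closure.refl 1] by blast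
  then have 2: "(replicate (Suc a) z, replicate (Suc N) z) \<in> eq_closure B" by simp
  have 3: "(replicate (Suc N) z, replicate N z) \<in> eq_closure B" using pow_ge[OF ap, of "Suc N" N] N by simp
  show ?thesis using 1 2 3 by (blast intro: eq_closure.trans eq_closure.sym)
qed


definition blocks :: "(nat \<Rightarrow> nat) \<Rightarrow> word \<Rightarrow> word" where
  "blocks f xs = concat (map (\<lambda>z. replicate (f z) z) xs)"

lemma blocks_Nil[simp]: "blocks f [] = []" by (simp add: blocks_def)
lemma blocks_Cons[simp]: "blocks f (x # xs) = replicate (f x) x @ blocks f xs" by (simp add: blocks_def)
lemma blocks_app[simp]: "blocks f (xs @ ys) = blocks f xs @ blocks f ys" by (simp add: blocks_def)
lemma blocks_cong: "(\<And>z. z \<in> set xs \<Longrightarrow> f z = g z) \<Longrightarrow> blocks f xs = blocks g xs"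
  by (induction xs) auto

fun fo :: "word \<Rightarrow> word" where
  "fo [] = []" | "fo (x # xs) = x # removeAll x (fo xs)"

lemma set_fo[simp]: "set (fo xs) = set xs" by (induction xs) auto
lemma distinct_fo[simp]: "distinct (fo xs)" by (induction xs) (auto simp: distinct_removeAll)

lemma L1:
  assumes "([0,1,0],[0,0,1]) \<in> eq_closure B"
  shows "(z # A @ replicate c z, replicate (Suc c) z @ A) \<in> eq_closure B"
proof (induction c)
  case 0 then show ?case by (simp add: eq_closure.refl)
next
  case (Suc c)
  have b: "(z # A @ [z], [z, z] @ A) \<in> eq_closure B"
    using eq_closure.subst[OF assms, of "\<lambda>y. if y = 0 then [z] else if y = 1 then A else []"] by simp
  have X: "((z # A @ [z]) @ replicate c z, ([z, z] @ A) @ replicate c z) \<in> eq_closure B"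
    using ec_app[OF b eq_closure.refl] by blast
  have Y: "([z] @ (z # A @ replicate c z), [z] @ (replicate (Suc c) z @ A)) \<in> eq_closure B"
    using ec_app[OF eq_closure.refl Suc] by blast
  show ?case using ec_trans3[OF X Y] by simp
qed

lemma blocks_ec:
  "(\<And>z. z \<in> set xs \<Longrightarrow> (replicate (f z) z, replicate (g z) z) \<in> eq_closure B)
   \<Longrightarrow> (blocks f xs, blocks g xs) \<in> eq_closure B"
proof (induction xs)
  case Nil then show ?case by (simp add: eq_closure.refl)
next
  case (Cons x xs)
  have "(replicate (f x) x @ blocks f xs, replicate (g x) x @ blocks g xs) \<in> eq_closure B"
    by (rule ec_app) (use Cons in auto)
  then show ?case by simp
qed

lemma gather:
  assumes "([0,1,0],[0,0,1]) \<in> eq_closure B"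
  shows "(u, blocks (count_list u) (fo u)) \<in> eq_closure B"
proof (induction u)
  case Nil then show ?case by (simp add: eq_closure.refl)
next
  case (Cons z u)
  show ?case
  proof (cases "z \<in> set u")
    case False
    then have "z \<notin> set (fo u)" by simp
    then have fo: "fo (z # u) = z # fo u" by simp
    have "blocks (count_list (z # u)) (fo u) = blocks (count_list u) (fo u)"
      by (rule blocks_cong) (use False in auto)
    then have e: "blocks (count_list (z # u)) (fo (z # u)) = [z] @ blocks (count_list u) (fo u)"
      using False fo by simp
    show ?thesis unfolding e using ec_app[OF eq_closure.refl Cons, of "[z]"] by simp
  next
    case True
    then have "z \<in> set (fo u)" by simp
    then obtain A C where AC: "fo u = A @ z # C" by (meson split_list)
    have d: "distinct (A @ z # C)" using distinct_fo[of u] AC by simp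
    then have zA: "z \<notin> set A" and zC: "z \<notin> set C" by auto
    have ra: "removeAll z (fo u) = A @ C" using AC zA zC by simp
    have cA: "blocks (count_list (z # u)) A = blocks (count_list u) A"
      by (rule blocks_cong) (use zA in auto)
    have cC: "blocks (count_list (z # u)) C = blocks (count_list u) C"
      by (rule blocks_cong) (use zC in auto)
    have e: "blocks (count_list (z # u)) (fo (z # u)) =
        replicate (Suc (count_list u z)) z @ blocks (count_list u) A @ blocks (count_list u) C"
      using ra cA cC by simp
    have IH: "(z # u, z # blocks (count_list u) A @ replicate (count_list u z) z @ blocks (count_list u) C) \<in> eq_closure B"
      using ec_app[OF eq_closure.refl Cons.IH, of "[z]"] AC by simp
    have Y: "((z # blocks (count_list u) A @ replicate (count_list u z) z) @ blocks (count_list u) C,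
           (replicate (Suc (count_list u z)) z @ blocks (count_list u) A) @ blocks (count_list u) C) \<in> eq_closure B"
      using ec_app[OF L1[OF assms] eq_closure.refl] by blast
    show ?thesis unfolding e using ec_trans3[OF IH Y] by simp
  qed
qed

lemma canon:
  assumes "([0,1,0],[0,0,1]) \<in> eq_closure B" "(replicate p 0, replicate (Suc p) 0) \<in> eq_closure B"
  shows "(u, blocks (\<lambda>z. min (count_list u z) p) (fo u)) \<in> eq_closure B"
proof -
  have "(blocks (count_list u) (fo u), blocks (\<lambda>z. min (count_list u z) p) (fo u)) \<in> eq_closure B"
  proof (rule blocks_ec)
    fix z
    show "(replicate (count_list u z) z, replicate (min (count_list u z) p) z) \<in> eq_closure B"
    proof (cases "count_list u z \<le> p")
      case True then show ?thesis by (simp add: eq_closure.refl)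
    next
      case False then show ?thesis using pow_ge[OF ec_letter[OF assms(2)], of "count_list u z" "p"] by simp
    qed
  qed
  then show ?thesis using ec_trans3[OF gather[OF assms(1), of u]] by simp
qed

lemma front:
  "(\<And>a. a \<in> set as \<Longrightarrow> (blocks e [a, y], blocks e [y, a]) \<in> eq_closure B)
   \<Longrightarrow> (blocks e (as @ [y]), blocks e (y # as)) \<in> eq_closure B"
proof (induction as)
  case Nil then show ?case by (simp add: eq_closure.refl)
next
  case (Cons a as)
  have IH: "(blocks e (as @ [y]), blocks e (y # as)) \<in> eq_closure B"
    using Cons.IH Cons.prems by simp
  have 1: "(replicate (e a) a @ blocks e (as @ [y]), replicate (e a) a @ blocks e (y # as)) \<in> eq_closure B"
    using ec_app[OF eq_closure.refl IH] by blast
  have s: "(blocks e [a, y], blocks e [y, a]) \<in> eq_closure B" using Cons.prems by simp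
  have 2: "(blocks e [a, y] @ blocks e as, blocks e [y, a] @ blocks e as) \<in> eq_closure B"
    using ec_app[OF s eq_closure.refl] by blast
  show ?case using ec_trans3[OF 1 2] by simp
qed

lemma bubble:
  assumes "distinct xs" "distinct ys" "set xs = set ys"
    "\<And>a b. subseq [a, b] xs \<Longrightarrow> subseq [b, a] ys \<Longrightarrow> (blocks e [a, b], blocks e [b, a]) \<in> eq_closure B"
  shows "(blocks e xs, blocks e ys) \<in> eq_closure B"
  using assms
proof (induction ys arbitrary: xs)
  case Nil then show ?case by (simp add: eq_closure.refl)
next
  case (Cons y ys)
  then have "y \<in> set xs" by simp
  then obtain as bs where xs: "xs = as @ y # bs" by (meson split_list)
  have yas: "y \<notin> set as" "y \<notin> set bs" using Cons.prems(1) xs by auto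
  have mv: "(blocks e [a, y], blocks e [y, a]) \<in> eq_closure B" if "a \<in> set as" for a
  proof (rule Cons.prems(4))
    have "subseq ([a] @ [y]) (as @ (y # bs))"
      by (rule list_emb_append_mono) (use that in \<open>auto simp: subseq_singleton_left\<close>)
    then show "subseq [a, y] xs" unfolding xs by simp
    have "a \<in> set ys" using that Cons.prems(3) xs yas by auto
    then show "subseq [y, a] (y # ys)" by (simp add: subseq_singleton_left)
  qed
  have f: "(blocks e (as @ [y]), blocks e (y # as)) \<in> eq_closure B" by (rule front) (use mv in auto)
  have IH: "(blocks e (as @ bs), blocks e ys) \<in> eq_closure B"
  proof (rule Cons.IH)
    show "distinct (as @ bs)" using Cons.prems(1) xs by auto
    show "distinct ys" using Cons.prems(2) by simp
    show "set (as @ bs) = set ys" using Cons.prems(1-3) xs by auto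
    fix a b assume h1: "subseq [a, b] (as @ bs)" and h2: "subseq [b, a] ys"
    show "(blocks e [a, b], blocks e [b, a]) \<in> eq_closure B"
    proof (rule Cons.prems(4))
      have "subseq (as @ bs) xs" unfolding xs subseq_append'
        by (rule list_emb_Cons) (rule subseq_order.order_refl)
      then show "subseq [a, b] xs" using h1 subseq_order.order_trans by blast
      show "subseq [b, a] (y # ys)" using h2 by (rule list_emb_Cons)
    qed
  qed
  have X: "(blocks e (as @ [y]) @ blocks e bs, blocks e (y # as) @ blocks e bs) \<in> eq_closure B"
    using ec_app[OF f eq_closure.refl] by blast
  have Y: "(blocks e [y] @ blocks e (as @ bs), blocks e [y] @ blocks e ys) \<in> eq_closure B"
    using ec_app[OF eq_closure.refl IH] by blast
  show ?case unfolding xs using ec_trans3[OF X Y] by simp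
qed


lemma subseq2_dec: "subseq [a, b] xs \<Longrightarrow> \<exists>P Q R. xs = P @ a # Q @ b # R"
proof (induction xs)
  case Nil then show ?case by simp
next
  case (Cons x xs)
  show ?case
  proof (cases "x = a")
    case True
    then have "subseq [b] xs" using Cons.prems by simp
    then have "b \<in> set xs" by (simp add: subseq_singleton_left)
    then obtain Q R where "xs = Q @ b # R" by (meson split_list)
    then show ?thesis using True by (metis append_Nil)
  next
    case False
    then have "subseq [a, b] xs" using Cons.prems by simp
    then obtain P Q R where "xs = P @ a # Q @ b # R" using Cons.IH by blast
    then have "x # xs = (x # P) @ a # Q @ b # R" by simp
    then show ?thesis by blast
  qed
qed

lemma sw_blocks_nil: "(\<And>z. z \<in> set xs \<Longrightarrow> s z = []) \<Longrightarrow> subst_word s (blocks e xs) = []"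
  by (induction xs) auto

lemma sw_two:
  assumes d: "distinct xs" and h: "subseq [a, b] xs"
  shows "a \<noteq> b \<and> subst_word (\<lambda>y. if y = a then [c] else if y = b then [d] else []) (blocks e xs)
     = replicate (e a) c @ replicate (e b) d"
proof -
  obtain P Q R where xs: "xs = P @ a # Q @ b # R" using subseq2_dec[OF h] by blast
  have ab: "a \<noteq> b" and nP: "a \<notin> set P" "b \<notin> set P" and nQ: "a \<notin> set Q" "b \<notin> set Q"
    and nR: "a \<notin> set R" "b \<notin> set R" using d xs by auto
  let ?s = "\<lambda>y. if y = a then [c] else if y = b then [d] else []"
  have "subst_word ?s (blocks e P) = []" by (rule sw_blocks_nil) (use nP in auto)
  moreover have "subst_word ?s (blocks e Q) = []" by (rule sw_blocks_nil) (use nQ in auto)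
  moreover have "subst_word ?s (blocks e R) = []" by (rule sw_blocks_nil) (use nR in auto)
  ultimately show ?thesis using ab unfolding xs by simp
qed

lemma fb_all:
  assumes cl: "eq_closure T' = T'" and h: "([], [0]) \<in> T'"
  shows "finitely_based T'"
proof -
  let ?B = "{([], [0::nat])}"
  have b: "([], [0]) \<in> eq_closure ?B" by (rule eq_closure.base) simp
  have l: "([z], []) \<in> eq_closure ?B" for z
    using eq_closure.sym[OF eq_closure.subst[OF b, of "\<lambda>_. [z]"]] by simp
  have u: "(u, []) \<in> eq_closure ?B" for u
  proof (induction u)
    case Nil then show ?case by (rule eq_closure.refl)
  next
    case (Cons z u)
    have "([z] @ u, [] @ u) \<in> eq_closure ?B" by (rule ec_app[OF l eq_closure.refl])
    then show ?case using ec_trans3[OF _ Cons] by simp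
  qed
  have "T' \<subseteq> eq_closure ?B"
  proof
    fix x assume "x \<in> T'"
    obtain u v where x: "x = (u, v)" by (cases x)
    show "x \<in> eq_closure ?B" unfolding x using ec_trans3[OF u eq_closure.sym[OF u]] by simp
  qed
  moreover have "eq_closure ?B \<subseteq> T'" by (rule ec_sub) (use h cl in auto)
  ultimately show ?thesis unfolding finitely_based_def by (intro exI[of _ ?B]) auto
qed


lemma hfb_core:
  assumes T1: "([0,1,0],[0,0,1]) \<in> T" and T2: "(replicate n 0, replicate (Suc n) 0) \<in> T"
    and th: "eq_theory T'" and sub: "T \<subseteq> T'"
  shows "finitely_based T'"
proof -
  have cl: "eq_closure T' = T'" using th eq_theory_def by simp
  have inT: "\<And>x. x \<in> T' \<Longrightarrow> x \<in> eq_closure T'" using cl by simp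
  define P where "P p \<longleftrightarrow> (replicate p 0, replicate (Suc p) (0::nat)) \<in> T'" for p
  have Pn: "P n" using T2 sub P_def by auto
  define p where "p = (LEAST p. P p)"
  have Pp: "P p" using LeastI[of P n] Pn p_def by simp
  have pmin: "\<And>q. P q \<Longrightarrow> p \<le> q" using Least_le[of P] p_def by simp
  show ?thesis
  proof (cases "p = 0")
    case True
    then show ?thesis using fb_all[OF cl] Pp P_def by simp
  next
    case False
    define SW :: "identity set" where "SW = {(replicate a 0 @ replicate b 1, replicate b 1 @ replicate a (0::nat)) | a b.
       a \<le> p \<and> b \<le> p \<and> (replicate a 0 @ replicate b 1, replicate b 1 @ replicate a 0) \<in> T'}"
    define B :: "identity set" where "B = {([0,1,0],[0,0,1]), (replicate p 0, replicate (Suc p) 0)} \<union> SW"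
    have "SW \<subseteq> (\<lambda>(a, b). (replicate a 0 @ replicate b 1, replicate b 1 @ replicate a (0::nat))) ` ({..p} \<times> {..p})"
      unfolding SW_def by auto
    then have finSW: "finite SW" by (rule finite_subset) simp
    have finB: "finite B" using finSW B_def by simp
    have BT: "B \<subseteq> T'" using T1 sub Pp P_def unfolding SW_def B_def by auto
    have Esub: "eq_closure B \<subseteq> T'" by (rule ec_sub[OF BT cl])
    have B1: "([0,1,0],[0,0,1]) \<in> eq_closure B" by (rule eq_closure.base) (simp add: B_def)
    have B2: "(replicate p 0, replicate (Suc p) 0) \<in> eq_closure B" by (rule eq_closure.base) (simp add: B_def)
    have ap: "(replicate p 0, replicate (Suc p) 0) \<in> eq_closure T'" using Pp P_def inT by auto
    have "T' \<subseteq> eq_closure B"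
    proof
      fix x assume "x \<in> T'"
      then obtain u v where x: "x = (u, v)" and uv: "(u, v) \<in> T'" by (cases x) auto
      have cnt: "min (count_list u z) p = min (count_list v z) p" for z
      proof -
        have h: "(replicate (count_list u z) 0, replicate (count_list v z) 0) \<in> eq_closure T'"
          using eq_closure.subst[OF inT[OF uv], of "\<lambda>y. if y = z then [0] else []"] by (simp add: sw_count)
        show ?thesis
        proof (cases "count_list u z = count_list v z")
          case True then show ?thesis by simp
        next
          case ne: False
          consider "count_list u z < count_list v z" | "count_list v z < count_list u z" using ne by linarith
          then show ?thesis
          proof cases
            case 1
            have "P (count_list u z)" using lemP[OF ap h 1] cl P_def by simp
            then have "p \<le> count_list u z" by (rule pmin)
            then show ?thesis using 1 by simp
          next
            case 2
            have "P (count_list v z)" using lemP[OF ap eq_closure.sym[OF h] 2] cl P_def by simp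
            then have "p \<le> count_list v z" by (rule pmin)
            then show ?thesis using 2 by simp
          qed
        qed
      qed
      have setuv: "set u = set v"
      proof -
        have "z \<in> set u \<longleftrightarrow> z \<in> set v" for z
        proof -
          have g: "z \<in> set w \<longleftrightarrow> min (count_list w z) p \<noteq> 0" for w
          proof -
            have "z \<in> set w \<longleftrightarrow> count_list w z \<noteq> 0" using count_list_0_iff[of w z] by simp
            then show ?thesis using \<open>p \<noteq> 0\<close> by simp
          qed
          have "z \<in> set u \<longleftrightarrow> min (count_list u z) p \<noteq> 0" by (rule g)
          moreover have "z \<in> set v \<longleftrightarrow> min (count_list v z) p \<noteq> 0" by (rule g)
          ultimately show ?thesis using cnt[of z] by metis
        qed
        then show ?thesis by blast
      qed
      define e where "e = (\<lambda>z. min (count_list u z) p)"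
      have ev: "(\<lambda>z. min (count_list v z) p) = e" unfolding e_def using cnt by (intro ext) simp
      have cu: "(u, blocks e (fo u)) \<in> eq_closure B" using canon[OF B1 B2, of u] e_def by simp
      have cv: "(v, blocks e (fo v)) \<in> eq_closure B" using canon[OF B1 B2, of v] ev by simp
      have cuT: "(u, blocks e (fo u)) \<in> eq_closure T'" using cu Esub inT by blast
      have cvT: "(v, blocks e (fo v)) \<in> eq_closure T'" using cv Esub inT by blast
      have cuv: "(blocks e (fo u), blocks e (fo v)) \<in> eq_closure T'"
        using ec_trans3[OF eq_closure.sym[OF cuT] ec_trans3[OF inT[OF uv] cvT]] by simp
      have bub: "(blocks e (fo u), blocks e (fo v)) \<in> eq_closure B"
      proof (rule bubble)
        show "distinct (fo u)" "distinct (fo v)" by simp_all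
        show "set (fo u) = set (fo v)" using setuv by simp
        fix a b assume h1: "subseq [a, b] (fo u)" and h2: "subseq [b, a] (fo v)"
        let ?s = "\<lambda>y. if y = a then [0::nat] else if y = b then [1] else []"
        have s1: "a \<noteq> b" "subst_word ?s (blocks e (fo u)) = replicate (e a) 0 @ replicate (e b) 1"
          using sw_two[OF distinct_fo h1, of 0 1] by auto
        have s2: "subst_word (\<lambda>y. if y = b then [1::nat] else if y = a then [0] else []) (blocks e (fo v))
            = replicate (e b) 1 @ replicate (e a) 0"
          using sw_two[OF distinct_fo h2, of 1 0 e] by auto
        have "(\<lambda>y. if y = b then [1::nat] else if y = a then [0] else []) = ?s" using s1(1) by (intro ext) auto
        then have s2': "subst_word ?s (blocks e (fo v)) = replicate (e b) 1 @ replicate (e a) 0" using s2 by simp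
        have "(replicate (e a) 0 @ replicate (e b) 1, replicate (e b) 1 @ replicate (e a) 0) \<in> T'"
          using eq_closure.subst[OF cuv, of ?s] s1 s2' cl by simp
        moreover have "e a \<le> p" "e b \<le> p" unfolding e_def by simp_all
        ultimately have "(replicate (e a) 0 @ replicate (e b) 1, replicate (e b) 1 @ replicate (e a) 0) \<in> B"
          unfolding B_def SW_def by blast
        then have "(replicate (e a) 0 @ replicate (e b) 1, replicate (e b) 1 @ replicate (e a) 0) \<in> eq_closure B"
          by (rule eq_closure.base)
        from eq_closure.subst[OF this, of "\<lambda>y. if y = 0 then [a] else [b]"]
        show "(blocks e [a, b], blocks e [b, a]) \<in> eq_closure B" by simp
      qed
      show "x \<in> eq_closure B" unfolding x
        using ec_trans3[OF cu ec_trans3[OF bub eq_closure.sym[OF cv]]] by simp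
    qed
    then have "eq_closure B = T'" using Esub by blast
    then show ?thesis unfolding finitely_based_def using finB by blast
  qed
qed


definition revT :: "identity set \<Rightarrow> identity set" where
  "revT S = (\<lambda>(u, v). (rev u, rev v)) ` S"

lemma revT_mem: "(u, v) \<in> revT S \<longleftrightarrow> (rev u, rev v) \<in> S"
proof
  assume "(u, v) \<in> revT S"
  then obtain a b where "(a, b) \<in> S" "u = rev a" "v = rev b" unfolding revT_def by auto
  then show "(rev u, rev v) \<in> S" by simp
next
  assume "(rev u, rev v) \<in> S"
  then have "(\<lambda>(u, v). (rev u, rev v)) (rev u, rev v) \<in> revT S" unfolding revT_def by (rule imageI)
  then show "(u, v) \<in> revT S" by simp
qed

lemma revT_revT: "revT (revT S) = S"
proof (rule set_eqI)
  fix x show "x \<in> revT (revT S) \<longleftrightarrow> x \<in> S" by (cases x) (simp add: revT_mem)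
qed

lemma sw_rev: "rev (subst_word s u) = subst_word (rev \<circ> s) (rev u)"
  by (induction u) auto

lemma ec_rev: "x \<in> eq_closure B \<Longrightarrow> (rev (fst x), rev (snd x)) \<in> eq_closure (revT B)"
proof (induction rule: eq_closure.induct)
  case (base p)
  then show ?case by (cases p) (auto intro: eq_closure.base simp: revT_mem)
next
  case (refl u) then show ?case by (simp add: eq_closure.refl)
next
  case (sym u v) then show ?case by (simp add: eq_closure.sym)
next
  case (trans u v w) then show ?case using eq_closure.trans by simp
next
  case (mult u v a b)
  then show ?case using eq_closure.mult[of "rev u" "rev v" "revT B" "rev b" "rev a"] by simp
next
  case (subst u v s)
  then show ?case using eq_closure.subst[of "rev u" "rev v" "revT B" "rev \<circ> s"] by (simp add: sw_rev)
qed

lemma ec_revT: "eq_closure (revT B) = revT (eq_closure B)"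
proof (rule set_eqI)
  fix x :: identity
  obtain u v where x: "x = (u, v)" by (cases x)
  show "x \<in> eq_closure (revT B) \<longleftrightarrow> x \<in> revT (eq_closure B)"
  proof
    assume "x \<in> eq_closure (revT B)"
    from ec_rev[OF this] show "x \<in> revT (eq_closure B)" unfolding x by (simp add: revT_revT revT_mem)
  next
    assume "x \<in> revT (eq_closure B)"
    then have "(rev u, rev v) \<in> eq_closure B" unfolding x by (simp add: revT_mem)
    from ec_rev[OF this] show "x \<in> eq_closure (revT B)" unfolding x by simp
  qed
qed

lemma hfb_rev:
  assumes "hereditarily_finitely_based (revT T)"
  shows "hereditarily_finitely_based T"
  unfolding hereditarily_finitely_based_def
proof (intro allI impI)
  fix T' assume h: "eq_theory T' \<and> T \<subseteq> T'"
  have "eq_theory (revT T')" using h by (simp add: eq_theory_def ec_revT)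
  moreover have "revT T \<subseteq> revT T'" using h unfolding revT_def by blast
  ultimately have "finitely_based (revT T')" using assms unfolding hereditarily_finitely_based_def by blast
  then obtain B where B: "finite B" "eq_closure B = revT T'" unfolding finitely_based_def by blast
  have "finite (revT B)" using B(1) unfolding revT_def by simp
  moreover have "eq_closure (revT B) = T'" using B(2) by (simp add: ec_revT revT_revT)
  ultimately
  show "finitely_based T'" unfolding finitely_based_def by blast
qed

lemma hfb1: "([0,1,0],[0,0,1]) \<in> T \<Longrightarrow> (replicate n 0, replicate (Suc n) 0) \<in> T \<Longrightarrow> hereditarily_finitely_based T"
  unfolding hereditarily_finitely_based_def using hfb_core by blast

lemma hfb2: "([0,1,0],[1,0,0]) \<in> T \<Longrightarrow> (replicate n 0, replicate (Suc n) 0) \<in> T \<Longrightarrow> hereditarily_finitely_based T"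
  by (rule hfb_rev, rule hfb1[of _ n]) (simp_all add: revT_mem replicate_append_same)


lemma not_sub00: "\<not> sublist [0, 0] [0, 1, 0::nat]"
  by (simp add: sublist_code prefix_def)

definition sig :: "(nat \<Rightarrow> word option) \<Rightarrow> nat \<Rightarrow> word" where
  "sig \<phi> y = (case \<phi> y of Some w \<Rightarrow> w | None \<Rightarrow> [0, 0])"

lemma sig_None: "\<phi> y = None \<Longrightarrow> sig \<phi> y = [0, 0]" by (simp add: sig_def)
lemma sig_Some: "\<phi> y = Some a \<Longrightarrow> sig \<phi> y = a" by (simp add: sig_def)

lemma carrier_Some: "Some a \<in> S_xyx_carrier \<Longrightarrow> sublist a [0, 1, 0]"
  unfolding S_xyx_carrier_def by auto

lemma eval_char:
  assumes car: "\<forall>x. \<phi> x \<in> S_xyx_carrier"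
  shows "S_xyx_eval \<phi> u = (if sublist (subst_word (sig \<phi>) u) [0, 1, 0]
           then Some (subst_word (sig \<phi>) u) else None)"
proof (induction u)
  case Nil then show ?case by simp
next
  case (Cons x w)
  let ?s = "subst_word (sig \<phi>) w"
  show ?case
  proof (cases "\<phi> x")
    case None
    have "\<not> sublist ([0, 0] @ ?s) [0, 1, 0]"
      using not_sub00 sublist_order.order.trans sublist_append_rightI by blast
    then show ?thesis using None by (simp add: sig_None S_xyx_mult_def)
  next
    case (Some a)
    show ?thesis
    proof (cases "sublist ?s [0, 1, 0]")
      case True
      then show ?thesis using Some Cons by (simp add: sig_Some S_xyx_mult_def)
    next
      case False
      have "\<not> sublist (a @ ?s) [0, 1, 0]"
        using False sublist_order.order.trans sublist_append_leftI by blast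
      then show ?thesis using Some Cons False by (simp add: sig_Some S_xyx_mult_def)
    qed
  qed
qed

lemma set_sig:
  assumes car: "\<forall>x. \<phi> x \<in> S_xyx_carrier"
  shows "set (subst_word (sig \<phi>) u) \<subseteq> {0, 1}"
proof (induction u)
  case Nil then show ?case by simp
next
  case (Cons x w)
  have "set (sig \<phi> x) \<subseteq> {0, 1}"
  proof (cases "\<phi> x")
    case None then show ?thesis by (simp add: sig_None)
  next
    case (Some a)
    then have "sublist a [0, 1, 0]" using car carrier_Some by metis
    then have "set a \<subseteq> set [0, 1, 0::nat]" by (rule set_mono_sublist)
    then show ?thesis using Some by (auto simp: sig_Some)
  qed
  then show ?case using Cons by simp
qed

lemma iso:
  assumes th: "eq_theory T" and nc: "\<not> contains_S_xyx T"
  shows "\<exists>w. w \<noteq> [0, 1, 0] \<and> set w \<subseteq> {0, 1} \<and> ([0, 1, 0], w) \<in> T"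
proof -
  have cl: "eq_closure T = T" using th eq_theory_def by simp
  obtain u v \<phi> where uv: "(u, v) \<in> T" and car: "\<forall>x. \<phi> x \<in> S_xyx_carrier"
    and ne: "S_xyx_eval \<phi> u \<noteq> S_xyx_eval \<phi> v"
    using nc unfolding contains_S_xyx_def S_xyx_satisfies_def by auto
  let ?su = "subst_word (sig \<phi>) u" and ?sv = "subst_word (sig \<phi>) v"
  have st: "(?su, ?sv) \<in> T" using eq_closure.subst[of u v T "sig \<phi>"] uv cl by simp
  have "\<exists>s s'. (s, s') \<in> T \<and> sublist s [0, 1, 0] \<and> s' \<noteq> s \<and> set s' \<subseteq> {0, 1}"
  proof (cases "sublist ?su [0, 1, 0]")
    case True
    then have "?sv \<noteq> ?su" using ne eval_char[OF car, of u] eval_char[OF car, of v] by auto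
    then show ?thesis using st True set_sig[OF car, of v] by blast
  next
    case False
    then have "sublist ?sv [0, 1, 0]" using ne eval_char[OF car, of u] eval_char[OF car, of v] by auto
    moreover have "?su \<noteq> ?sv" using False calculation by auto
    moreover have "(?sv, ?su) \<in> T" using eq_closure.sym[of ?su ?sv T] st cl by simp
    ultimately show ?thesis using set_sig[OF car, of u] by blast
  qed
  then obtain s s' where ss: "(s, s') \<in> T" "sublist s [0, 1, 0]" "s' \<noteq> s" "set s' \<subseteq> {0, 1}" by blast
  then obtain a b where ab: "[0, 1, 0] = a @ s @ b" unfolding sublist_def by blast
  have m: "(a @ s @ b, a @ s' @ b) \<in> T" using eq_closure.mult[of s s' T a b] ss cl by simp
  have ne: "a @ s' @ b \<noteq> [0, 1, 0]"
  proof
    assume h: "a @ s' @ b = [0, 1, 0]"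
    have "a @ s' @ b = a @ s @ b" by (rule HOL.trans[OF h ab])
    then have "s' = s" by simp
    then show False using ss(3) by simp
  qed
  have s010: "set [0, 1, 0::nat] = {0, 1}" by (simp add: insert_commute)
  have "set [0, 1, 0::nat] = set (a @ s @ b)" using ab by (rule arg_cong)
  then have sab: "set (a @ s @ b) = {0, 1}" using s010 by simp
  have st: "set (a @ s' @ b) \<subseteq> {0, 1}" using sab ss(4) by (simp only: set_append) blast
  have m': "([0, 1, 0], a @ s' @ b) \<in> T" using m unfolding ab[symmetric] .
  show ?thesis using m' ne st by blast
qed


lemma count_rep: "count_list (replicate k x) y = (if x = y then k else 0)"
  by (induction k) auto

lemma lemP2:
  assumes ap: "(replicate n 0, replicate (Suc n) 0) \<in> eq_closure B"
    and h: "(replicate a 0, replicate b 0) \<in> eq_closure B" and ne: "a \<noteq> b"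
  shows "(replicate (min a b) 0, replicate (Suc (min a b)) 0) \<in> eq_closure B"
proof (cases "a < b")
  case True then show ?thesis using lemP[OF ap h True] by simp
next
  case False then have "b < a" using ne by simp
  then show ?thesis using lemP[OF ap eq_closure.sym[OF h]] by simp
qed

lemma cases_w:
  assumes ap: "(replicate n 0, replicate (Suc n) 0) \<in> eq_closure T"
    and h: "([0,1,0], w) \<in> eq_closure T" and ne: "w \<noteq> [0,1,0]" and sw: "set w \<subseteq> {0,1}"
  shows "([0,1,0],[0,1,0,0]) \<in> eq_closure T \<or> ([0,1,0],[0,0,1,0]) \<in> eq_closure T
     \<or> ([0,1,0],[0,0,1]) \<in> eq_closure T \<or> ([0,1,0],[1,0,0]) \<in> eq_closure T"
proof -
  have xx: "([0,1,0],[0,1,0,0]) \<in> eq_closure T" if "([0],[0,0]) \<in> eq_closure T"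
    using ec_app[OF eq_closure.refl[of "[0,1]"] that] by simp
  have small: "([0],[0,0]) \<in> eq_closure T" if "(replicate m 0, replicate (Suc m) 0) \<in> eq_closure T" "m \<le> 1" for m
  proof (cases m)
    case 0 then show ?thesis using ec_app[OF that(1) eq_closure.refl[of "[0]"]] by simp
  next
    case (Suc k) then have "m = 1" using that(2) by simp
    then show ?thesis using that(1) by simp
  qed
  have c1: "([0], replicate (count_list w 1) 0) \<in> eq_closure T"
    using eq_closure.subst[OF h, of "\<lambda>y. if y = 1 then [0] else []"] by (simp add: sw_count)
  have c0: "([0,0], replicate (count_list w 0) 0) \<in> eq_closure T"
    using eq_closure.subst[OF h, of "\<lambda>y. if y = 0 then [0] else []"] by (simp add: sw_count)
  show ?thesis
  proof (cases "count_list w 1 = 1")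
    case False
    have "(replicate 1 0, replicate (count_list w 1) 0) \<in> eq_closure T" using c1 by simp
    from lemP2[OF ap this] False
    have "(replicate (min 1 (count_list w 1)) 0, replicate (Suc (min 1 (count_list w 1))) 0) \<in> eq_closure T"
      by simp
    then have "([0],[0,0]) \<in> eq_closure T" by (rule small) simp
    then show ?thesis using xx by blast
  next
    case True
    then have "count_list w 1 \<noteq> 0" by simp
    then have "1 \<in> set w" using count_list_0_iff[of w 1] by simp
    then obtain A C where w: "w = A @ 1 # C" by (meson split_list)
    have "count_list A 1 + count_list C 1 = 0" using True unfolding w by simp
    then have "count_list A 1 = 0" "count_list C 1 = 0" by simp_all
    then have nA: "1 \<notin> set A" and nC: "1 \<notin> set C" by (simp_all add: count_list_0_iff)
    have sA: "set A \<subseteq> {0,1}" and sC: "set C \<subseteq> {0,1}" using sw unfolding w by simp_all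
    have "\<forall>y\<in>set A. y = 0" using sA nA by blast
    then have A: "replicate (length A) 0 = A" by (rule replicate_length_same)
    have "\<forall>y\<in>set C. y = 0" using sC nC by blast
    then have C: "replicate (length C) 0 = C" by (rule replicate_length_same)
    define i where "i = length A"
    define j where "j = length C"
    have w': "w = replicate i 0 @ 1 # replicate j 0" unfolding w i_def j_def using A C by simp
    have cw0: "count_list w 0 = i + j" unfolding w' by (simp add: count_rep)
    have c0': "(replicate 2 0, replicate (i + j) 0) \<in> eq_closure T" using c0 cw0 by (simp add: numeral_2_eq_2)
    have hw: "([0,1,0], replicate i 0 @ 1 # replicate j 0) \<in> eq_closure T" using h w' by simp
    show ?thesis
    proof (cases "i + j = 2")
      case True
      then consider "i = 0" "j = 2" | "i = 1" "j = 1" | "i = 2" "j = 0" by linarith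
      then show ?thesis
      proof cases
        case 1 then have "w = [1,0,0]" using w' by (simp add: numeral_2_eq_2)
        then show ?thesis using h by simp
      next
        case 2 then have "w = [0,1,0]" using w' by simp
        then show ?thesis using ne by simp
      next
        case 3 then have "w = [0,0,1]" using w' by (simp add: numeral_2_eq_2)
        then show ?thesis using h by simp
      qed
    next
      case False
      have m: "(replicate (min 2 (i + j)) 0, replicate (Suc (min 2 (i + j))) 0) \<in> eq_closure T"
        using lemP2[OF ap c0'] False by simp
      show ?thesis
      proof (cases "i + j < 2")
        case True
        then have "([0],[0,0]) \<in> eq_closure T" using small[OF m] by simp
        then show ?thesis using xx by blast
      next
        case False
        then have "min 2 (i + j) = 2" by simp
        then have ap2: "(replicate 2 0, replicate (Suc 2) 0) \<in> eq_closure T" using m by simp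
        have pge: "(replicate a 0, replicate b 0) \<in> eq_closure T" if "a \<ge> 2" "b \<ge> 2" for a b
          using pow_ge[OF ap2 that] .
        have ij3: "i + j \<ge> 3" using False \<open>i + j \<noteq> 2\<close> by linarith
        consider "j \<ge> 2" | "j = 1" | "j = 0" by linarith
        then show ?thesis
        proof cases
          case 1
          have X: "([0,1,0] @ [0], (replicate i 0 @ 1 # replicate j 0) @ [0]) \<in> eq_closure T"
            using ec_app[OF hw eq_closure.refl] by blast
          have Y: "((replicate i 0 @ [1]) @ replicate (Suc j) 0, (replicate i 0 @ [1]) @ replicate j 0) \<in> eq_closure T"
            using ec_app[OF eq_closure.refl[of "replicate i 0 @ [1]"] pge[of "Suc j" j]] 1 by simp
          have Z: "([0,1,0,0], (replicate i 0 @ [1]) @ replicate j 0) \<in> eq_closure T"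
            using ec_trans3[OF X Y] by (simp add: replicate_append_same)
          have "([0,1,0,0], [0,1,0]) \<in> eq_closure T"
            using ec_trans3[OF Z eq_closure.sym[OF hw]] by simp
          then show ?thesis using eq_closure.sym by blast
        next
          case 2
          then have i2: "i \<ge> 2" using ij3 by simp
          have X: "([0] @ [0,1,0], [0] @ (replicate i 0 @ 1 # replicate j 0)) \<in> eq_closure T"
            using ec_app[OF eq_closure.refl hw] by blast
          have Y: "(replicate (Suc i) 0 @ [1,0], replicate i 0 @ [1,0]) \<in> eq_closure T"
            using ec_app[OF pge[of "Suc i" i] eq_closure.refl[of "[1,0]"]] i2 by simp
          have Z: "([0,0,1,0], replicate i 0 @ [1,0]) \<in> eq_closure T"
            using ec_trans3[OF X Y] 2 by simp
          have "([0,0,1,0], [0,1,0]) \<in> eq_closure T"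
            using ec_trans3[OF Z eq_closure.sym[OF hw]] 2 by simp
          then show ?thesis using eq_closure.sym by blast
        next
          case 3
          then have i3: "i \<ge> 3" using ij3 by simp
          have Y: "(replicate i 0 @ [1], replicate 2 0 @ [1]) \<in> eq_closure T"
            using ec_app[OF pge[of i 2] eq_closure.refl[of "[1]"]] i3 by simp
          have "([0,1,0], replicate 2 0 @ [1]) \<in> eq_closure T"
            using ec_trans3[OF hw Y] 3 by simp
          then show ?thesis by (simp add: numeral_2_eq_2)
        qed
      qed
    qed
  qed
qed

theorem lemma2p1:
  fixes T :: "identity set"
  assumes "eq_theory T"
    and "aperiodic_variety T"
    and "\<not> contains_S_xyx T"
    and "\<not> hereditarily_finitely_based T"
  shows "satisfies T [0, 1, 0] [0, 1, 0, 0] \<or> satisfies T [0, 1, 0] [0, 0, 1, 0]"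
proof -
  have cl: "eq_closure T = T" using assms(1) eq_theory_def by simp
  obtain n where apT: "(replicate n 0, replicate (Suc n) 0) \<in> T"
    using assms(2) unfolding aperiodic_variety_def satisfies_def by blast
  obtain w where w: "w \<noteq> [0, 1, 0]" "set w \<subseteq> {0, 1}" "([0, 1, 0], w) \<in> T"
    using iso[OF assms(1,3)] by blast
  have ap: "(replicate n 0, replicate (Suc n) 0) \<in> eq_closure T" using apT cl by simp
  have h: "([0, 1, 0], w) \<in> eq_closure T" using w(3) cl by simp
  have "([0,1,0],[0,1,0,0]) \<in> T \<or> ([0,1,0],[0,0,1,0]) \<in> T
     \<or> ([0,1,0],[0,0,1]) \<in> T \<or> ([0,1,0],[1,0,0]) \<in> T"
    using cases_w[OF ap h w(1,2)] cl by simp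
  moreover have "([0,1,0],[0,0,1]) \<notin> T" using hfb1[OF _ apT] assms(4) by blast
  moreover have "([0,1,0],[1,0,0]) \<notin> T" using hfb2[OF _ apT] assms(4) by blast
  ultimately show ?thesis unfolding satisfies_def by blast
qed

end
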